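(* For all positive even $k_1,\ldots, k_n$ one has \[S_{k_1}\,|\, \ldots\,|\, S_{k_n}=S_{|\vec{k}|-n,F_n}\, .\]
   Context: $\mathscr{P}$ is the set of partitions and $r_m(\lambda)$ the number of parts of $\lambda$ equal to $m$. $S_k(\lambda)=-\frac{B_k}{2k}+\sum_i\lambda_i^{k-1}$ for even $k$. For $k>0$ and $f:\mathbb{N}\to\mathbb{Q}$ extended by $f(0)=0$, $S_{k,f}(\lambda)=-\frac{B_{k+1}}{2(k+1)}\delta_{f,\mathrm{id}}+\sum_{m\ge1}m^kf(r_m(\lambda))$ (so $S_k=S_{k-1,\mathrm{id}}$). $F_n$ is the Faulhaber polynomial: the polynomial with zero constant term with $F_n(N)=\sum_{i=1}^N i^{n-1}$ for $N\ge1$. $|\vec k|=k_1+\cdots+k_n$. The induced product $\odot$ is defined by $\langle f\odot g\rangle_{\vec u}=\langle f\rangle_{\vec u}\langle g\rangle_{\vec u}$ with $\langle f\rangle_{\vec u}=\sum_\lambda f(\lambda)u_{\lambda_1}u_{\lambda_2}\cdots/\sum_\lambda u_{\lambda_1}u_{\lambda_2}\cdots$. The connected product is $f_1|\ldots|f_n=\sum_{\alpha\in\Pi(n)}\mu(\alpha,\mathbf{1})\bigodot_{A\in\alpha}f_A$, where $\Pi(n)$ is the set of set partitions of $\{1,\ldots,n\}$, $\mu(\alpha,\mathbf{1})=(-1)^{\ell(\alpha)-1}(\ell(\alpha)-1)!$, and $f_A=\prod_{a\in A}f_a$ (pointwise product). *)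

theory Defs
  imports Complex_Main "HOL-Library.Multiset" "HOL-Library.FuncSet" "HOL-Library.Disjoint_Sets"
begin

text \<open>Bernoulli numbers (explicit formula; agrees with the usual B_k for all k except k = 1,
  and only even indices are used below).\<close>
definition bernoulli :: "nat \<Rightarrow> rat" where
  "bernoulli m = (\<Sum>k\<le>m. (1 / of_nat (k+1)) *
      (\<Sum>j\<le>k. (-1)^j * of_nat (k choose j) * of_nat j ^ m))"

text \<open>Partitions are finite multisets of positive integers (the parts).
  Functions on partitions are functions on nat multisets; only values on
  partitions matter.\<close>
definition is_partition :: "nat multiset \<Rightarrow> bool" where
  "is_partition p \<longleftrightarrow> 0 \<notin># p"

text \<open>Formal power series in the variables u_0, u_1, u_2, ...: the coefficient of the
  monomial prod_{i in M} u_i is indexed by the multiset M.\<close>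
type_synonym series = "nat multiset \<Rightarrow> rat"

definition ser_mult :: "series \<Rightarrow> series \<Rightarrow> series" where
  "ser_mult a b M = (\<Sum>A\<in>{A. A \<subseteq># M}. a A * b (M - A))"

definition ser_prod :: "'i set \<Rightarrow> ('i \<Rightarrow> series) \<Rightarrow> series" where
  "ser_prod I a M = (\<Sum>\<phi>\<in>{\<phi> \<in> I \<rightarrow>\<^sub>E {A. A \<subseteq># M}. sum \<phi> I = M}. \<Prod>i\<in>I. a i (\<phi> i))"

definition gen :: "(nat multiset \<Rightarrow> rat) \<Rightarrow> series" where
  "gen f M = (if is_partition M then f M else 0)"

definition Zser :: series where
  "Zser = gen (\<lambda>_. 1)"

text \<open>The u-bracket <f>_u = (sum f(lambda) u_lambda) / (sum u_lambda).\<close>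
definition ubracket :: "(nat multiset \<Rightarrow> rat) \<Rightarrow> series" where
  "ubracket f = (THE q. ser_mult q Zser = gen f)"

definition odot_family :: "'i set \<Rightarrow> ('i \<Rightarrow> nat multiset \<Rightarrow> rat) \<Rightarrow> nat multiset \<Rightarrow> rat" where
  "odot_family I f = (THE h. (\<forall>M. \<not> is_partition M \<longrightarrow> h M = 0) \<and>
      ubracket h = ser_prod I (\<lambda>i. ubracket (f i)))"

definition connected_product :: "nat \<Rightarrow> (nat \<Rightarrow> nat multiset \<Rightarrow> rat) \<Rightarrow> nat multiset \<Rightarrow> rat" where
  "connected_product n f = (\<lambda>p.
     \<Sum>\<alpha>\<in>{P. partition_on {1..n} P}.
       (-1) ^ (card \<alpha> - 1) * of_nat (fact (card \<alpha> - 1)) *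
       odot_family \<alpha> (\<lambda>A q. \<Prod>a\<in>A. f a q) p)"

definition S :: "nat \<Rightarrow> nat multiset \<Rightarrow> rat" where
  "S k p = - bernoulli k / (2 * of_nat k) + (\<Sum>\<^sub># (image_mset (\<lambda>x. of_nat x ^ (k - 1)) p))"

text \<open>S_{k,f}(lambda) = -B_{k+1}/(2(k+1)) delta_{f,id} + sum_{m>=1} m^k f(r_m(lambda)),
  with f extended by f(0) = 0.\<close>
definition S_f :: "nat \<Rightarrow> (nat \<Rightarrow> rat) \<Rightarrow> nat multiset \<Rightarrow> rat" where
  "S_f k f p = (if (\<forall>N\<ge>1. f N = of_nat N) then - bernoulli (k+1) / (2 * of_nat (k+1)) else 0)
      + (\<Sum>m\<in>set_mset p. of_nat m ^ k * f (count p m))"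

definition faulhaber :: "nat \<Rightarrow> nat \<Rightarrow> rat" where
  "faulhaber n N = (\<Sum>i=1..N. of_nat i ^ (n - 1))"

end

theory Submission
  imports Defs
begin

datatype ser = Ser (coef: "nat multiset \<Rightarrow> rat")

lemma ser_eqI: "(\<And>M. coef x M = coef y M) \<Longrightarrow> x = y"
  by (cases x; cases y) auto

lemma finite_submsets: "finite {A. A \<subseteq># (M::'a multiset)}"
proof (induction M)
  case empty
  then show ?case by simp
next
  case (add x M)
  have "{A. A \<subseteq># add_mset x M} \<subseteq> {A. A \<subseteq># M} \<union> add_mset x ` {A. A \<subseteq># M}"
  proof
    fix A assume "A \<in> {A. A \<subseteq># add_mset x M}"
    then have A: "A \<subseteq># add_mset x M" by simp
    show "A \<in> {A. A \<subseteq># M} \<union> add_mset x ` {A. A \<subseteq># M}"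
    proof (cases "x \<in># A")
      case True
      then have "A = add_mset x (A - {#x#})" by simp
      moreover have "A - {#x#} \<subseteq># M" using A True
        by (metis add_mset_remove_trivial_If calculation subset_mset.add_diff_inverse subset_mset.diff_diff_right subset_mset.dual_order.refl add_mset_diff_bothsides mset_subset_eq_add_mset_cancel)
      ultimately show ?thesis by blast
    next
      case False
      have "count A y \<le> count M y" for y
        using mset_subset_eq_count[OF A, of y] False by (cases "y = x") (auto simp: not_in_iff)
      then have "A \<subseteq># M" by (simp add: subseteq_mset_def)
      then show ?thesis by simp
    qed
  qed
  then show ?case using add by (auto intro: finite_subset)
qed

lemma ser_mult_comm: "ser_mult a b M = ser_mult b a M"
  unfolding ser_mult_def
  by (rule sum.reindex_bij_witness[where i="\<lambda>A. M - A" and j="\<lambda>A. M - A"])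
     (auto simp: subset_mset.diff_diff_right mult.commute)

lemma ser_mult_assoc: "ser_mult (ser_mult a b) c M = ser_mult a (ser_mult b c) M"
proof -
  have "ser_mult (ser_mult a b) c M =
     (\<Sum>(A,B)\<in>(SIGMA A:{A. A \<subseteq># M}. {B. B \<subseteq># A}). a B * b (A - B) * c (M - A))"
    unfolding ser_mult_def sum_distrib_right
    by (subst sum.Sigma) (auto simp: finite_submsets)
  also have "\<dots> = (\<Sum>(B,D)\<in>(SIGMA B:{B. B \<subseteq># M}. {D. D \<subseteq># M - B}). a B * (b D * c (M - B - D)))"
  proof (rule sum.reindex_bij_witness[where i="\<lambda>(B,D). (B + D, B)" and j="\<lambda>(A,B). (B, A - B)"])
    show "\<And>x. x \<in> (SIGMA B:{B. B \<subseteq># M}. {D. D \<subseteq># M - B}) \<Longrightarrow>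
         (case (case x of (B, D) \<Rightarrow> (B + D, B)) of (A, B) \<Rightarrow> (B, A - B)) = x" by auto
    show "\<And>x. x \<in> (SIGMA B:{B. B \<subseteq># M}. {D. D \<subseteq># M - B}) \<Longrightarrow>
         (case x of (B, D) \<Rightarrow> (B + D, B)) \<in> (SIGMA A:{A. A \<subseteq># M}. {B. B \<subseteq># A})"
      by (clarsimp simp: subseteq_mset_def) (metis le_diff_conv2 add.commute)
    show "\<And>x. x \<in> (SIGMA A:{A. A \<subseteq># M}. {B. B \<subseteq># A}) \<Longrightarrow>
         (case (case x of (A, B) \<Rightarrow> (B, A - B)) of (B, D) \<Rightarrow> (B + D, B)) = x"
      by (auto simp: subset_mset.add_diff_inverse)
    show "\<And>x. x \<in> (SIGMA A:{A. A \<subseteq># M}. {B. B \<subseteq># A}) \<Longrightarrow>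
         (case x of (A, B) \<Rightarrow> (B, A - B)) \<in> (SIGMA B:{B. B \<subseteq># M}. {D. D \<subseteq># M - B})"
      by (clarsimp simp: subseteq_mset_def; metis diff_le_mono order_trans)
    have e: "M - B - (A - B) = M - A" if "B \<subseteq># A" "A \<subseteq># M" for A B :: "nat multiset"
      using that by (auto simp: multiset_eq_iff subseteq_mset_def)
    show "\<And>x. x \<in> (SIGMA A:{A. A \<subseteq># M}. {B. B \<subseteq># A}) \<Longrightarrow>
         (case case x of (A, B) \<Rightarrow> (B, A - B) of (B, D) \<Rightarrow> a B * (b D * c (M - B - D))) =
         (case x of (A, B) \<Rightarrow> a B * b (A - B) * c (M - A))"
      by (auto simp: mult.assoc e)
  qed
  also have "\<dots> = ser_mult a (ser_mult b c) M"
    unfolding ser_mult_def sum_distrib_left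
    by (subst sum.Sigma) (auto simp: finite_submsets)
  finally show ?thesis .
qed

instantiation ser :: comm_ring_1
begin
definition "0 = Ser (\<lambda>_. 0)"
definition "1 = Ser (\<lambda>M. if M = {#} then 1 else 0)"
definition "x + y = Ser (\<lambda>M. coef x M + coef y M)"
definition "x - y = Ser (\<lambda>M. coef x M - coef y M)"
definition "- x = Ser (\<lambda>M. - coef x M)"
definition "x * y = Ser (ser_mult (coef x) (coef y))"
instance
proof
  fix a b c :: ser
  show "a * b * c = a * (b * c)"
    by (rule ser_eqI) (simp add: times_ser_def ser_mult_assoc)
  show "a * b = b * a"
    by (rule ser_eqI) (simp add: times_ser_def ser_mult_comm)
  show "1 * a = a"
  proof (rule ser_eqI)
    fix M
    have "coef (1 * a) M = (\<Sum>A\<in>{A. A \<subseteq># M}. if A = {#} then coef a (M - A) else 0)"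
      by (auto simp: times_ser_def one_ser_def ser_mult_def intro!: sum.cong)
    also have "\<dots> = coef a M" by (subst sum.delta) (auto simp: finite_submsets)
    finally show "coef (1 * a) M = coef a M" .
  qed
  show "(a + b) * c = a * c + b * c"
    by (rule ser_eqI) (simp add: times_ser_def plus_ser_def ser_mult_def sum.distrib algebra_simps)
  show "a + b + c = a + (b + c)" by (rule ser_eqI) (simp add: plus_ser_def)
  show "a + b = b + a" by (rule ser_eqI) (simp add: plus_ser_def)
  show "0 + a = a" by (rule ser_eqI) (simp add: plus_ser_def zero_ser_def)
  show "- a + a = 0" by (rule ser_eqI) (simp add: plus_ser_def zero_ser_def uminus_ser_def)
  show "a - b = a + - b" by (rule ser_eqI) (simp add: plus_ser_def minus_ser_def uminus_ser_def)
  show "(0::ser) \<noteq> 1" by (auto simp: zero_ser_def one_ser_def fun_eq_iff)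
qed
end

lemma coef_add [simp]: "coef (x + y) M = coef x M + coef y M" by (simp add: plus_ser_def)
lemma coef_diff [simp]: "coef (x - y) M = coef x M - coef y M" by (simp add: minus_ser_def)
lemma coef_uminus [simp]: "coef (- x) M = - coef x M" by (simp add: uminus_ser_def)
lemma coef_zero [simp]: "coef 0 M = 0" by (simp add: zero_ser_def)
lemma coef_one: "coef 1 M = (if M = {#} then 1 else 0)" by (simp add: one_ser_def)
lemma coef_mult: "coef (x * y) M = (\<Sum>A\<in>{A. A \<subseteq># M}. coef x A * coef y (M - A))"
  by (simp add: times_ser_def ser_mult_def)
lemma coef_sum: "coef (sum f I) M = (\<Sum>i\<in>I. coef (f i) M)"
  by (induction I rule: infinite_finite_induct) auto

lemma sum_subset_mset: "finite I \<Longrightarrow> j \<in> I \<Longrightarrow> f j \<subseteq># sum f I"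
  for f :: "'i \<Rightarrow> 'a multiset"
  by (simp add: sum.remove)

lemma ser_prod_empty: "ser_prod {} a M = (if M = {#} then 1 else 0)"
  by (auto simp: ser_prod_def)

lemma ser_prod_insert:
  assumes "finite I" "i \<notin> I"
  shows "ser_prod (insert i I) a M = ser_mult (a i) (ser_prod I a) M"
proof -
  let ?S = "{\<phi> \<in> insert i I \<rightarrow>\<^sub>E {A. A \<subseteq># M}. sum \<phi> (insert i I) = M}"
  let ?T = "SIGMA A:{A. A \<subseteq># M}. {\<psi> \<in> I \<rightarrow>\<^sub>E {B. B \<subseteq># M - A}. sum \<psi> I = M - A}"
  have "ser_prod (insert i I) a M = (\<Sum>\<phi>\<in>?S. \<Prod>j\<in>insert i I. a j (\<phi> j))"
    by (simp add: ser_prod_def)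
  also have "\<dots> = (\<Sum>(A,\<psi>)\<in>?T. a i A * (\<Prod>j\<in>I. a j (\<psi> j)))"
  proof (rule sum.reindex_bij_witness[where j="\<lambda>\<phi>. (\<phi> i, restrict \<phi> I)" and i="\<lambda>(A,\<psi>). \<psi>(i := A)"])
    fix \<phi> assume \<phi>: "\<phi> \<in> ?S"
    then show "(case (\<phi> i, restrict \<phi> I) of (A, \<psi>) \<Rightarrow> \<psi>(i := A)) = \<phi>"
      using assms by (auto simp: PiE_def extensional_def fun_eq_iff)
    have s: "sum \<phi> (insert i I) = \<phi> i + sum \<phi> I" using assms by simp
    have "sum (restrict \<phi> I) I = sum \<phi> I" by (rule sum.cong) auto
    moreover have "\<phi> j \<subseteq># sum \<phi> I" if "j \<in> I" for j using sum_subset_mset[OF assms(1) that] .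
    moreover have M: "sum \<phi> I = M - \<phi> i"
    proof -
      have "M = \<phi> i + sum \<phi> I" using \<phi> s by simp
      then show ?thesis by simp
    qed
    ultimately have "restrict \<phi> I \<in> I \<rightarrow>\<^sub>E {B. B \<subseteq># M - \<phi> i}" "sum (restrict \<phi> I) I = M - \<phi> i"
      by auto
    moreover have "\<phi> i \<subseteq># M" using \<phi> by auto
    ultimately show "(\<phi> i, restrict \<phi> I) \<in> ?T"
      by auto
    show "(case (\<phi> i, restrict \<phi> I) of (A, \<psi>) \<Rightarrow> a i A * (\<Prod>j\<in>I. a j (\<psi> j))) =
        (\<Prod>j\<in>insert i I. a j (\<phi> j))"
      using assms by (simp add: prod.insert)
  next
    fix x assume x: "x \<in> ?T"
    obtain A \<psi> where x_eq: "x = (A, \<psi>)" by (cases x)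
    with x have A: "A \<subseteq># M" and \<psi>: "\<psi> \<in> I \<rightarrow>\<^sub>E {B. B \<subseteq># M - A}" "sum \<psi> I = M - A" by auto
    show "(case (case x of (A, \<psi>) \<Rightarrow> \<psi>(i := A)) of \<phi> \<Rightarrow> (\<phi> i, restrict \<phi> I)) = x"
      using x_eq \<psi> assms by (auto simp: PiE_def extensional_def fun_eq_iff)
    have "sum (\<psi>(i := A)) I = sum \<psi> I" using assms by (intro sum.cong) auto
    then have "sum (\<psi>(i := A)) (insert i I) = A + (M - A)" using assms \<psi> by simp
    also have "\<dots> = M" using A by simp
    finally have "sum (\<psi>(i := A)) (insert i I) = M" .
    moreover have "\<psi> j \<subseteq># M" if "j \<in> I" for j
      using \<psi>(1) that by (auto simp: PiE_def Pi_def) (meson diff_subset_eq_self subset_mset.order_trans)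
    ultimately show "(case x of (A, \<psi>) \<Rightarrow> \<psi>(i := A)) \<in> ?S"
      using x_eq \<psi> A assms by (auto simp: PiE_def extensional_def)
  qed
  also have "\<dots> = (\<Sum>A\<in>{A. A \<subseteq># M}. a i A * ser_prod I a (M - A))"
    unfolding ser_prod_def sum_distrib_left
    by (subst sum.Sigma) (auto simp: finite_submsets assms(1) intro!: finite_PiE finite_subset[OF _ finite_PiE[of I "\<lambda>_. {A. A \<subseteq># _}"]])
  finally show ?thesis by (simp add: ser_mult_def)
qed

lemma ser_prod_eq: "finite I \<Longrightarrow> ser_prod I a = coef (\<Prod>i\<in>I. Ser (a i))"
proof (induction I rule: finite_induct)
  case empty
  then show ?case by (auto simp: fun_eq_iff ser_prod_empty coef_one)
next
  case (insert i I)
  then show ?case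
    by (intro ext) (simp add: ser_prod_insert times_ser_def insert.IH)
qed

definition Zs :: ser where "Zs = Ser Zser"
definition gs :: "(nat multiset \<Rightarrow> rat) \<Rightarrow> ser" where "gs f = Ser (gen f)"
definition Eb :: "(nat multiset \<Rightarrow> rat) \<Rightarrow> ser" where "Eb f = Ser (ubracket f)"
definition sc :: "rat \<Rightarrow> ser" where "sc c = Ser (\<lambda>M. if M = {#} then c else 0)"
definition pp :: "ser \<Rightarrow> ser" where "pp x = Ser (\<lambda>M. if 0 \<in># M then 0 else coef x M)"

lemma Zser_empty [simp]: "Zser {#} = 1"
  by (simp add: Zser_def gen_def is_partition_def)

lemma coef_Zs: "coef Zs M = (if 0 \<in># M then 0 else 1)"
  by (simp add: Zs_def Zser_def gen_def is_partition_def)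

lemma coef_gs: "coef (gs f) M = (if 0 \<in># M then 0 else f M)"
  by (simp add: gs_def gen_def is_partition_def)

function zinv :: "nat multiset \<Rightarrow> rat" where
  "zinv M = (if M = {#} then 1 else - (\<Sum>A\<in>{A. A \<subseteq># M \<and> A \<noteq> {#}}. Zser A * zinv (M - A)))"
  by auto
termination
proof (relation "measure size")
  fix M x :: "nat multiset"
  assume "\<not> M = {#}" "x \<in> {A. A \<subseteq># M \<and> A \<noteq> {#}}"
  then show "(M - x, M) \<in> measure size"
    by (auto simp: size_Diff_submset) (metis nonempty_has_size size_mset_mono zero_less_iff_neq_zero diff_less)
qed auto

declare zinv.simps[simp del]

definition Zi :: ser where "Zi = Ser zinv"

lemma Zs_Zi: "Zs * Zi = 1"
proof (rule ser_eqI)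
  fix M :: "nat multiset"
  have fin: "finite {A. A \<subseteq># M}" by (rule finite_submsets)
  have "coef (Zs * Zi) M = (\<Sum>A\<in>{A. A \<subseteq># M}. Zser A * zinv (M - A))"
    by (simp add: coef_mult Zs_def Zi_def)
  also have "\<dots> = Zser {#} * zinv M + (\<Sum>A\<in>{A. A \<subseteq># M} - {{#}}. Zser A * zinv (M - A))"
    by (subst sum.remove[OF fin, of "{#}"]) auto
  also have "{A. A \<subseteq># M} - {{#}} = {A. A \<subseteq># M \<and> A \<noteq> {#}}" by auto
  also have "Zser {#} * zinv M + (\<Sum>A\<in>{A. A \<subseteq># M \<and> A \<noteq> {#}}. Zser A * zinv (M - A)) = coef 1 M"
    by (subst (1) zinv.simps) (auto simp: coef_one)
  finally show "coef (Zs * Zi) M = coef 1 M" .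
qed

lemma inverse_unique_ser: "a * Zs = 1 \<Longrightarrow> a = Zi"
proof -
  assume "a * Zs = 1"
  then have "a * Zs * Zi = Zi" by simp
  then show "a = Zi" by (simp add: mult.assoc Zs_Zi)
qed

lemma pp_mult: "pp (x * y) = pp x * pp y"
proof (rule ser_eqI)
  fix M
  show "coef (pp (x * y)) M = coef (pp x * pp y) M"
  proof (cases "0 \<in># M")
    case True
    have "coef (pp x * pp y) M = 0"
      unfolding coef_mult
    proof (rule sum.neutral, safe)
      fix A assume A: "A \<subseteq># M"
      have "count M 0 = count A 0 + count (M - A) 0" using A
        by (simp add: subseteq_mset_def)
      then have "0 \<in># A \<or> 0 \<in># M - A" using True by (metis add_0 count_inI not_in_iff)
      then show "coef (pp x) A * coef (pp y) (M - A) = 0" by (auto simp: pp_def)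
    qed
    then show ?thesis using True by (simp add: pp_def)
  next
    case False
    have "coef (pp x * pp y) M = coef (x * y) M"
      unfolding coef_mult
    proof (rule sum.cong)
      fix A assume "A \<in> {A. A \<subseteq># M}"
      then have "0 \<notin># A" "0 \<notin># M - A" using False
        by (auto dest: mset_subset_eqD in_diffD)
      then show "coef (pp x) A * coef (pp y) (M - A) = coef x A * coef y (M - A)"
        by (simp add: pp_def)
    qed simp
    then show ?thesis using False by (simp add: pp_def)
  qed
qed

lemma pp_one: "pp 1 = 1"
  by (rule ser_eqI) (auto simp: pp_def coef_one)

lemma pp_prod: "pp (\<Prod>i\<in>I. f i) = (\<Prod>i\<in>I. pp (f i))"
  by (induction I rule: infinite_finite_induct) (auto simp: pp_one pp_mult)

lemma pp_Zs: "pp Zs = Zs"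
  by (rule ser_eqI) (simp add: pp_def coef_Zs)

lemma pp_gs: "pp (gs f) = gs f"
  by (rule ser_eqI) (simp add: pp_def coef_gs)

lemma pp_Zi: "pp Zi = Zi"
proof -
  have "pp Zi * Zs = 1" using pp_mult[of Zi Zs] Zs_Zi by (simp add: pp_Zs pp_one mult.commute)
  then show ?thesis by (rule inverse_unique_ser)
qed

lemma ubracket_eq: "ubracket f = coef (gs f * Zi)"
  unfolding ubracket_def
proof (rule the_equality)
  have "Ser (ser_mult (coef (gs f * Zi)) Zser) = gs f * Zi * Zs"
    by (simp add: times_ser_def Zs_def)
  also have "\<dots> = gs f" by (simp add: mult.assoc mult.commute[of Zi] Zs_Zi)
  finally show "ser_mult (coef (gs f * Zi)) Zser = gen f"
    by (metis gs_def ser.inject)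
next
  fix q assume "ser_mult q Zser = gen f"
  then have "Ser q * Zs = gs f" by (simp add: times_ser_def Zs_def gs_def)
  then have "Ser q * Zs * Zi = gs f * Zi" by simp
  then have "Ser q = gs f * Zi" by (simp add: mult.assoc Zs_Zi)
  then show "q = coef (gs f * Zi)" by (metis ser.sel)
qed

lemma Eb_eq: "Eb f = gs f * Zi"
  by (simp add: Eb_def ubracket_eq)

lemma pp_Eb: "pp (Eb f) = Eb f"
  by (simp add: Eb_eq pp_mult pp_gs pp_Zi)

lemma odot_family_eq:
  assumes "finite I" "is_partition p"
  shows "odot_family I g p = coef ((\<Prod>i\<in>I. Eb (g i)) * Zs) p"
proof -
  define s where "s = (\<Prod>i\<in>I. Eb (g i))"
  have sp: "ser_prod I (\<lambda>i. ubracket (g i)) = coef s"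
    using assms(1) by (simp add: ser_prod_eq s_def Eb_def)
  have pps: "pp (s * Zs) = s * Zs" by (simp add: s_def pp_mult pp_prod pp_Eb pp_Zs)
  define h0 where "h0 = (\<lambda>M. if is_partition M then coef (s * Zs) M else 0)"
  have gs_h0: "gs h0 = s * Zs"
  proof (rule ser_eqI)
    fix M show "coef (gs h0) M = coef (s * Zs) M"
      using arg_cong[OF pps, of "\<lambda>x. coef x M"]
      by (auto simp: coef_gs h0_def is_partition_def pp_def)
  qed
  have "odot_family I g = h0"
    unfolding odot_family_def sp
  proof (rule the_equality)
    have "ubracket h0 = coef s"
      by (simp add: ubracket_eq gs_h0 mult.assoc Zs_Zi)
    then show "(\<forall>M. \<not> is_partition M \<longrightarrow> h0 M = 0) \<and> ubracket h0 = coef s"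
      by (auto simp: h0_def)
  next
    fix h assume h: "(\<forall>M. \<not> is_partition M \<longrightarrow> h M = 0) \<and> ubracket h = coef s"
    then have "gs h * Zi = s" by (metis ubracket_eq ser.collapse)
    then have "gs h * Zi * Zs = s * Zs" by simp
    then have "gs h = s * Zs" by (simp add: mult.assoc mult.commute[of Zi] Zs_Zi)
    show "h = h0"
    proof
      fix M
      have "coef (gs h) M = coef (s * Zs) M" using \<open>gs h = s * Zs\<close> by simp
      then show "h M = h0 M" using h by (auto simp: h0_def coef_gs is_partition_def)
    qed
  qed
  then show ?thesis using assms(2) by (simp add: h0_def s_def)
qed

definition mu :: "nat \<Rightarrow> 'a::comm_ring_1" where
  "mu l = (-1) ^ (l - 1) * of_nat (fact (l - 1))"

definition cum :: "('e set \<Rightarrow> 'a::comm_ring_1) \<Rightarrow> 'e set \<Rightarrow> 'a" where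
  "cum m C = (\<Sum>\<alpha>\<in>{P. partition_on C P}. mu (card \<alpha>) * (\<Prod>A\<in>\<alpha>. m A))"

lemma mu_rec: "l \<ge> 2 \<Longrightarrow> mu l + of_nat (l - 1) * mu (l - 1) = (0::'a::comm_ring_1)"
proof -
  assume "l \<ge> 2"
  then obtain j where l: "l = j + 2" by (metis add.commute le_iff_add)
  have "mu l = (-1) ^ (j + 1) * of_nat (fact (j + 1)) * (1::'a)" unfolding mu_def l by simp
  also have "\<dots> = - ((-1) ^ j * of_nat (j + 1) * of_nat (fact j))"
    by (simp add: fact_Suc algebra_simps)
  finally have a: "mu l = - ((-1) ^ j * of_nat (j + 1) * of_nat (fact j) :: 'a)" .
  have b: "of_nat (l - 1) * mu (l - 1) = (of_nat (j + 1) * ((-1) ^ j * of_nat (fact j)) :: 'a)"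
    unfolding mu_def l by simp
  show ?thesis unfolding a b by (simp add: algebra_simps)
qed

lemma partition_block_unique:
  assumes "partition_on C P" "D \<in> P" "E \<in> P" "x \<in> D" "x \<in> E"
  shows "D = E"
  using assms partition_onD2[OF assms(1)] unfolding disjoint_def by blast

lemma partition_card_blocks_without:
  assumes "partition_on C P" "c \<in> C" "finite P"
  shows "card {D \<in> P. c \<notin> D} = card P - 1"
proof -
  obtain Dc where Dc: "Dc \<in> P" "c \<in> Dc" using assms partition_onD1 by blast
  have "{D \<in> P. c \<notin> D} = P - {Dc}"
    using Dc partition_block_unique[OF assms(1)] by blast
  then show ?thesis using Dc assms(3) by simp
qed

lemma partition_card1:
  assumes "partition_on C P" "card P = 1"
  shows "P = {C}"
proof -
  obtain X where "P = {X}" using assms(2) card_1_singletonE by blast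
  moreover have "\<Union>P = C" using assms(1) partition_onD1 by blast
  ultimately show ?thesis by simp
qed

theorem cum_recursion:
  fixes m :: "'e set \<Rightarrow> 'a::comm_ring_1"
  assumes fin: "finite C" and c: "c \<in> C" and m0: "m {} = 1"
  shows "(\<Sum>B\<in>{B. c \<in> B \<and> B \<subseteq> C}. cum m B * m (C - B)) = m C"
proof -
  let ?Bs = "{B. c \<in> B \<and> B \<subseteq> C}"
  let ?\<Pi> = "\<lambda>B. {P. partition_on B P}"
  have finBs: "finite ?Bs" by (rule finite_subset[where B="Pow C"]) (use fin in auto)
  have finPi: "finite (?\<Pi> B)" if "B \<subseteq> C" for B
    using finitely_many_partition_on finite_subset[OF that fin] by blast
  have finel: "finite P" if "partition_on B P" "B \<subseteq> C" for B P
    using finite_elements[OF finite_subset[OF that(2) fin] that(1)] .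
  define F where "F = (\<lambda>(B, \<alpha>). mu (card \<alpha>) * (\<Prod>A\<in>\<alpha>. m A) * m (C - B) :: 'a)"
  define H where "H = (\<lambda>(\<pi>::'e set set, D::'e set). mu (card \<pi> - 1) * (\<Prod>A\<in>\<pi>. m A) :: 'a)"
  have "(\<Sum>B\<in>?Bs. cum m B * m (C - B)) = cum m C * m (C - C) + (\<Sum>B\<in>?Bs - {C}. cum m B * m (C - B))"
    using c by (subst sum.remove[OF finBs, of C]) auto
  also have "(\<Sum>B\<in>?Bs - {C}. cum m B * m (C - B)) = (\<Sum>(B, \<alpha>)\<in>(SIGMA B:?Bs - {C}. ?\<Pi> B). F (B, \<alpha>))"
    unfolding cum_def F_def sum_distrib_right
    by (subst sum.Sigma) (use finBs finPi in auto)
  also have "\<dots> = (\<Sum>(\<pi>, D)\<in>(SIGMA \<pi>:?\<Pi> C. {D \<in> \<pi>. c \<notin> D}). H (\<pi>, D))"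
  proof (rule sum.reindex_bij_witness[where j="\<lambda>(B, \<alpha>). (insert (C - B) \<alpha>, C - B)"
        and i="\<lambda>(\<pi>, D). (C - D, \<pi> - {D})"])
    fix a assume a: "a \<in> (SIGMA B:?Bs - {C}. ?\<Pi> B)"
    obtain B \<alpha> where ab: "a = (B, \<alpha>)" by (cases a)
    with a have B: "c \<in> B" "B \<subseteq> C" "B \<noteq> C" and \<alpha>: "partition_on B \<alpha>" by auto
    have U: "\<Union>\<alpha> = B" using \<alpha> partition_onD1 by blast
    have ne: "C - B \<noteq> {}" using B by blast
    have notin: "C - B \<notin> \<alpha>"
    proof
      assume "C - B \<in> \<alpha>"
      then have "C - B \<subseteq> B" using U by blast
      then show False using ne by blast
    qed
    have dj: "disjnt (C - B) (\<Union>\<alpha>)" using U by (auto simp: disjnt_def)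
    have CCB: "C - (C - B) = B" using B by blast
    have "partition_on C (insert (C - B) \<alpha>)"
      using partition_on_insert[OF dj, of C] \<alpha> CCB ne by auto
    then show "(case a of (B, \<alpha>) \<Rightarrow> (insert (C - B) \<alpha>, C - B)) \<in> (SIGMA \<pi>:?\<Pi> C. {D \<in> \<pi>. c \<notin> D})"
      using ab B by auto
    show "(case case a of (B, \<alpha>) \<Rightarrow> (insert (C - B) \<alpha>, C - B) of (\<pi>, D) \<Rightarrow> (C - D, \<pi> - {D})) = a"
      using ab CCB notin by auto
    have fa: "finite \<alpha>" using finel[OF \<alpha> B(2)] .
    show "(case (case a of (B, \<alpha>) \<Rightarrow> (insert (C - B) \<alpha>, C - B)) of (\<pi>, D) \<Rightarrow> H (\<pi>, D)) =
        (case a of (B, \<alpha>) \<Rightarrow> F (B, \<alpha>))"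
      using ab fa notin by (simp add: H_def F_def algebra_simps)
  next
    fix b assume b: "b \<in> (SIGMA \<pi>:?\<Pi> C. {D \<in> \<pi>. c \<notin> D})"
    obtain \<pi> D where pd: "b = (\<pi>, D)" by (cases b)
    with b have \<pi>: "partition_on C \<pi>" and D: "D \<in> \<pi>" "c \<notin> D" by auto
    have DC: "D \<subseteq> C" using \<pi> D partition_onD1 by blast
    have Dne: "D \<noteq> {}" using \<pi> D partition_onD3 by blast
    have dj: "disjnt D (\<Union>(\<pi> - {D}))"
      using partition_onD2[OF \<pi>] D unfolding disjoint_def disjnt_def by blast
    have ins: "insert D (\<pi> - {D}) = \<pi>" using D by blast
    have "partition_on (C - D) (\<pi> - {D})"
      using partition_on_insert[OF dj, of C] \<pi> ins by auto
    then show "(case b of (\<pi>, D) \<Rightarrow> (C - D, \<pi> - {D})) \<in> (SIGMA B:?Bs - {C}. ?\<Pi> B)"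
      using pd c D DC Dne by auto
    have "C - (C - D) = D" using DC by blast
    then show "(case case b of (\<pi>, D) \<Rightarrow> (C - D, \<pi> - {D}) of (B, \<alpha>) \<Rightarrow> (insert (C - B) \<alpha>, C - B)) = b"
      using pd ins by auto
  qed
  also have "\<dots> = (\<Sum>\<pi>\<in>?\<Pi> C. of_nat (card \<pi> - 1) * mu (card \<pi> - 1) * (\<Prod>A\<in>\<pi>. m A))"
  proof -
    have "(\<Sum>(\<pi>, D)\<in>(SIGMA \<pi>:?\<Pi> C. {D \<in> \<pi>. c \<notin> D}). H (\<pi>, D)) =
        (\<Sum>\<pi>\<in>?\<Pi> C. \<Sum>D\<in>{D \<in> \<pi>. c \<notin> D}. H (\<pi>, D))"
      by (subst sum.Sigma) (use finPi finel in auto)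
    also have "\<dots> = (\<Sum>\<pi>\<in>?\<Pi> C. of_nat (card \<pi> - 1) * mu (card \<pi> - 1) * (\<Prod>A\<in>\<pi>. m A))"
      by (rule sum.cong) (auto simp: H_def partition_card_blocks_without[OF _ c] finel)
    finally show ?thesis .
  qed
  finally have "(\<Sum>B\<in>?Bs. cum m B * m (C - B)) =
      (\<Sum>\<pi>\<in>?\<Pi> C. (mu (card \<pi>) + of_nat (card \<pi> - 1) * mu (card \<pi> - 1)) * (\<Prod>A\<in>\<pi>. m A))"
    using m0 by (simp add: cum_def sum.distrib algebra_simps)
  also have "\<dots> = (\<Sum>\<pi>\<in>?\<Pi> C. if \<pi> = {C} then m C else 0)"
  proof (rule sum.cong)
    fix \<pi> assume "\<pi> \<in> ?\<Pi> C"
    then have \<pi>: "partition_on C \<pi>" by simp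
    have "\<pi> \<noteq> {}" using \<pi> c partition_onD1 by blast
    then have "card \<pi> \<ge> 1" using finel[OF \<pi>] by (simp add: Suc_le_eq card_gt_0_iff)
    then consider "card \<pi> = 1" | "card \<pi> \<ge> 2" by linarith
    then show "(mu (card \<pi>) + of_nat (card \<pi> - 1) * mu (card \<pi> - 1)) * (\<Prod>A\<in>\<pi>. m A) =
        (if \<pi> = {C} then m C else 0)"
    proof cases
      case 1
      then show ?thesis using partition_card1[OF \<pi>] by (simp add: mu_def)
    next
      case 2
      then have "\<pi> \<noteq> {C}" by auto
      then show ?thesis by (simp only: mu_rec[OF 2] mult_zero_left) simp
    qed
  qed simp
  also have "\<dots> = m C"
  proof -
    have "finite (?\<Pi> C)" by (rule finPi[OF subset_refl])
    moreover have "partition_on C {C}" by (rule partition_on_space) (use c in blast)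
    ultimately show ?thesis by (simp add: sum.delta)
  qed
  finally show ?thesis .
qed

theorem cum_unique:
  fixes m K :: "'e set \<Rightarrow> 'a::comm_ring_1"
  assumes fin: "finite U" and m0: "m {} = 1"
    and rec: "\<And>C c. C \<subseteq> U \<Longrightarrow> c \<in> C \<Longrightarrow> (\<Sum>B\<in>{B. c \<in> B \<and> B \<subseteq> C}. K B * m (C - B)) = m C"
  shows "C \<subseteq> U \<Longrightarrow> C \<noteq> {} \<Longrightarrow> K C = cum m C"
proof (induction "card C" arbitrary: C rule: less_induct)
  case less
  obtain c where c: "c \<in> C" using less.prems by blast
  have finC: "finite C" using less.prems fin finite_subset by blast
  have finBs: "finite {B. c \<in> B \<and> B \<subseteq> C}" by (rule finite_subset[where B="Pow C"]) (use finC in auto)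
  have IH: "K B = cum m B" if "B \<in> {B. c \<in> B \<and> B \<subseteq> C} - {C}" for B
  proof -
    from that have "B \<subset> C" "B \<noteq> {}" "B \<subseteq> U" using less.prems by auto
    then show ?thesis using less.hyps psubset_card_mono[OF finC] by blast
  qed
  define X where "X = (\<Sum>B\<in>{B. c \<in> B \<and> B \<subseteq> C} - {C}. cum m B * m (C - B))"
  have e3: "(\<Sum>B\<in>{B. c \<in> B \<and> B \<subseteq> C} - {C}. K B * m (C - B)) = X"
    unfolding X_def using IH by (intro sum.cong) auto
  have "K C * m (C - C) + (\<Sum>B\<in>{B. c \<in> B \<and> B \<subseteq> C} - {C}. K B * m (C - B)) = m C"
    using rec[OF less.prems(1) c] c by (subst (asm) sum.remove[OF finBs, of C]) auto
  then have e1: "K C = m C - X" using m0 by (simp add: e3 eq_diff_eq)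
  have "cum m C * m (C - C) + X = m C"
    unfolding X_def using cum_recursion[of C c m, OF finC c m0] c by (subst (asm) sum.remove[OF finBs, of C]) auto
  then have e2: "cum m C = m C - X" using m0 by (simp add: eq_diff_eq)
  show ?case using e1 e2 by simp
qed

lemma coef_sc: "coef (sc c) M = (if M = {#} then c else 0)"
  by (simp add: sc_def)

lemma coef_sc_mult: "coef (sc c * x) M = c * coef x M"
proof -
  have "coef (sc c * x) M = (\<Sum>A\<in>{A. A \<subseteq># M}. if A = {#} then c * coef x (M - A) else 0)"
    by (auto simp: coef_mult coef_sc intro!: sum.cong)
  also have "\<dots> = c * coef x M" by (subst sum.delta) (auto simp: finite_submsets)
  finally show ?thesis .
qed

lemma sc_add: "sc (a + b) = sc a + sc b" by (rule ser_eqI) (simp add: coef_sc)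
lemma sc_mult: "sc (a * b) = sc a * sc b" by (rule ser_eqI) (simp add: coef_sc_mult coef_sc)
lemma sc_one: "sc 1 = 1" by (rule ser_eqI) (simp add: coef_sc coef_one)
lemma sc_zero: "sc 0 = 0" by (rule ser_eqI) (simp add: coef_sc)
lemma sc_uminus: "sc (- a) = - sc a" by (rule ser_eqI) (simp add: coef_sc)
lemma sc_sum: "sc (\<Sum>i\<in>I. f i) = (\<Sum>i\<in>I. sc (f i))"
  by (induction I rule: infinite_finite_induct) (auto simp: sc_zero sc_add)
lemma sc_prod: "sc (\<Prod>i\<in>I. f i) = (\<Prod>i\<in>I. sc (f i))"
  by (induction I rule: infinite_finite_induct) (auto simp: sc_one sc_mult)
lemma sc_of_nat: "of_nat n = sc (of_nat n)"
  by (induction n) (auto simp: sc_zero sc_one sc_add)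
lemma sc_power: "sc (a ^ n) = sc a ^ n"
  by (induction n) (auto simp: sc_one sc_mult)

lemma gs_add: "gs (\<lambda>q. f q + g q) = gs f + gs g"
  by (rule ser_eqI) (simp add: coef_gs)
lemma gs_scale: "gs (\<lambda>q. c * f q) = sc c * gs f"
  by (rule ser_eqI) (simp add: coef_gs coef_sc_mult)
lemma gs_sum: "gs (\<lambda>q. \<Sum>i\<in>I. f i q) = (\<Sum>i\<in>I. gs (f i))"
  by (rule ser_eqI) (simp add: coef_gs coef_sum)
lemma gs_const: "gs (\<lambda>q. c) = sc c * Zs"
  by (rule ser_eqI) (simp add: coef_gs coef_sc_mult coef_Zs)

lemma Eb_add: "Eb (\<lambda>q. f q + g q) = Eb f + Eb g"
  by (simp add: Eb_eq gs_add algebra_simps)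
lemma Eb_scale: "Eb (\<lambda>q. c * f q) = sc c * Eb f"
  by (simp add: Eb_eq gs_scale algebra_simps)
lemma Eb_sum: "Eb (\<lambda>q. \<Sum>i\<in>I. f i q) = (\<Sum>i\<in>I. Eb (f i))"
  by (simp add: Eb_eq gs_sum sum_distrib_right)
lemma Eb_const: "Eb (\<lambda>q. c) = sc c"
  by (simp add: Eb_eq gs_const mult.assoc Zs_Zi)
lemma Eb_times_Zs: "Eb f * Zs = gs f"
  by (simp add: Eb_eq mult.assoc mult.commute[of Zi] Zs_Zi)

subsection \<open>One-variable series\<close>

definition conv :: "(nat \<Rightarrow> rat) \<Rightarrow> (nat \<Rightarrow> rat) \<Rightarrow> nat \<Rightarrow> rat" where
  "conv a b s = (\<Sum>i\<le>s. a i * b (s - i))"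

definition iota :: "nat \<Rightarrow> (nat \<Rightarrow> rat) \<Rightarrow> ser" where
  "iota m a = Ser (\<lambda>M. if set_mset M \<subseteq> {m} then a (size M) else 0)"

definition nu :: "nat \<Rightarrow> (nat multiset \<Rightarrow> rat) \<Rightarrow> ser" where
  "nu m h = Ser (\<lambda>M. if m \<notin># M \<and> 0 \<notin># M then h M else 0)"

lemma rep_of_subset: "set_mset M \<subseteq> {m} \<Longrightarrow> M = replicate_mset (count M m) m"
  by (induction M) auto

lemma rep_diff: "replicate_mset n m - replicate_mset j m = replicate_mset (n - j) m"
  by (simp add: multiset_eq_iff)

lemma submsets_rep: "{A. A \<subseteq># replicate_mset n m} = (\<lambda>j. replicate_mset j m) ` {..n}"
proof
  show "{A. A \<subseteq># replicate_mset n m} \<subseteq> (\<lambda>j. replicate_mset j m) ` {..n}"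
    by (auto elim!: msubseteq_replicate_msetE)
  show "(\<lambda>j. replicate_mset j m) ` {..n} \<subseteq> {A. A \<subseteq># replicate_mset n m}"
    by (auto simp: replicate_mset_msubseteq_iff)
qed

lemma iota_mult: "iota m a * iota m b = iota m (conv a b)"
proof (rule ser_eqI)
  fix M :: "nat multiset"
  show "coef (iota m a * iota m b) M = coef (iota m (conv a b)) M"
  proof (cases "set_mset M \<subseteq> {m}")
    case True
    define n where "n = count M m"
    have M: "M = replicate_mset n m" using rep_of_subset[OF True] n_def by simp
    have inj: "inj_on (\<lambda>j. replicate_mset j m) {..n}"
      by (auto simp: inj_on_def dest: arg_cong[of _ _ size])
    have "coef (iota m a * iota m b) M =
        (\<Sum>A\<in>(\<lambda>j. replicate_mset j m) ` {..n}. coef (iota m a) A * coef (iota m b) (M - A))"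
      by (simp add: coef_mult M submsets_rep)
    also have "\<dots> = (\<Sum>j\<le>n. a j * b (n - j))"
      by (subst sum.reindex[OF inj]) (auto simp: iota_def M intro!: sum.cong
 simp: rep_diff)
    also have "\<dots> = coef (iota m (conv a b)) M"
      by (simp add: iota_def M conv_def)
    finally show ?thesis .
  next
    case False
    have "coef (iota m a * iota m b) M = 0"
      unfolding coef_mult
    proof (rule sum.neutral, safe)
      fix A assume A: "A \<subseteq># M"
      have "M = A + (M - A)" using A by simp
      then have "set_mset M = set_mset A \<union> set_mset (M - A)" by (metis set_mset_union)
      then have "\<not> set_mset A \<subseteq> {m} \<or> \<not> set_mset (M - A) \<subseteq> {m}" using False by auto
      then show "coef (iota m a) A * coef (iota m b) (M - A) = 0" by (auto simp: iota_def)
    qed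
    then show ?thesis using False by (simp add: iota_def)
  qed
qed

definition indep :: "nat \<Rightarrow> (nat multiset \<Rightarrow> rat) \<Rightarrow> bool" where
  "indep m h \<longleftrightarrow> (\<forall>q. h q = h (filter_mset (\<lambda>x. x \<noteq> m) q))"

lemma gs_factor:
  assumes m: "m \<noteq> 0" and h: "indep m h"
  shows "gs (\<lambda>q. \<phi> (count q m) * h q) = iota m \<phi> * nu m h"
proof (rule ser_eqI)
  fix M :: "nat multiset"
  define A0 where "A0 = filter_mset (\<lambda>x. x = m) M"
  have A0: "A0 = replicate_mset (count M m) m" unfolding A0_def by (rule filter_eq_replicate_mset)
  have A0sub: "A0 \<subseteq># M" unfolding A0_def by simp
  have MA0: "M - A0 = filter_mset (\<lambda>x. x \<noteq> m) M"
    by (auto simp: multiset_eq_iff A0)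
  have uniq: "A = A0" if "A \<subseteq># M" "set_mset A \<subseteq> {m}" "m \<notin># M - A" for A
  proof -
    have A: "A = replicate_mset (count A m) m" using rep_of_subset[OF that(2)] .
    have "count A m \<le> count M m" using that(1) by (simp add: subseteq_mset_def)
    moreover have "count (M - A) m = 0" using that(3) by (simp add: not_in_iff)
    ultimately have "count A m = count M m" by simp
    then show ?thesis using A A0 by simp
  qed
  have "coef (iota m \<phi> * nu m h) M =
      (\<Sum>A\<in>{A. A \<subseteq># M}. if A = A0 then coef (iota m \<phi>) A0 * coef (nu m h) (M - A0) else 0)"
    unfolding coef_mult
    by (rule sum.cong) (auto simp: iota_def nu_def dest: uniq)
  also have "\<dots> = coef (iota m \<phi>) A0 * coef (nu m h) (M - A0)"
    using A0sub by (subst sum.delta) (auto simp: finite_submsets)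
  also have "\<dots> = (if 0 \<in># M then 0 else \<phi> (count M m) * h M)"
  proof -
    have "h (M - A0) = h M" using h unfolding indep_def MA0 by metis
    moreover have "0 \<in># M - A0 \<longleftrightarrow> 0 \<in># M" using m by (simp add: MA0)
    moreover have "m \<notin># M - A0" by (simp add: MA0)
    ultimately show ?thesis by (simp add: iota_def nu_def A0)
  qed
  finally show "coef (gs (\<lambda>q. \<phi> (count q m) * h q)) M = coef (iota m \<phi> * nu m h) M"
    by (simp add: coef_gs)
qed

lemma indep_const: "indep m (\<lambda>q. c)" by (simp add: indep_def)

lemma Zs_factor: "m \<noteq> 0 \<Longrightarrow> Zs = iota m (\<lambda>_. 1) * nu m (\<lambda>_. 1)"
  using gs_factor[of m "\<lambda>_. 1" "\<lambda>_. 1"] by (simp add: indep_const gs_def Zs_def Zser_def)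

definition Qs :: "nat \<Rightarrow> ser" where
  "Qs m = iota m (\<lambda>s. if s = 0 then 1 else if s = 1 then -1 else 0)"

lemma iota_delta: "iota m (\<lambda>s. if s = 0 then 1 else 0) = 1"
  by (rule ser_eqI) (auto simp: iota_def coef_one)

lemma iota_one_Qs: "iota m (\<lambda>_. 1) * Qs m = 1"
proof -
  have "conv (\<lambda>_. 1) (\<lambda>s. if s = 0 then 1 else if s = 1 then -1 else 0) = (\<lambda>s. if s = 0 then 1 else 0)"
  proof
    fix s :: nat
    show "conv (\<lambda>_. 1) (\<lambda>s. if s = 0 then 1 else if s = 1 then -1 else 0) s = (if s = 0 then 1 else 0)"
    proof (cases s)
      case 0 then show ?thesis by (simp add: conv_def)
    next
      case (Suc t)
      have "conv (\<lambda>_. 1) (\<lambda>s. if s = 0 then 1 else if s = 1 then -1 else 0) s =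
          (\<Sum>i\<le>s. if i = s then 1 else if i = t then -1 else 0)"
        unfolding conv_def by (rule sum.cong) (auto simp: Suc)
      also have "\<dots> = 0" using Suc by (simp add: sum.If_cases)
      finally show ?thesis using Suc by simp
    qed
  qed
  then show ?thesis by (simp add: Qs_def iota_mult iota_delta)
qed

lemma Eb_factor:
  assumes "m \<noteq> 0" "indep m h"
  shows "Eb (\<lambda>q. \<phi> (count q m) * h q) = iota m \<phi> * nu m h * Zi"
  by (simp add: Eb_eq gs_factor[OF assms])

lemma Eb_indep:
  assumes m: "m \<noteq> 0" and h: "indep m h"
  shows "Eb (\<lambda>q. \<phi> (count q m) * h q) = Eb (\<lambda>q. \<phi> (count q m)) * Eb h"
proof -
  have e1: "Eb (\<lambda>q. \<phi> (count q m)) = iota m \<phi> * nu m (\<lambda>_. 1) * Zi"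
    using Eb_factor[OF m indep_const, of \<phi> 1] by simp
  have e2: "Eb h = iota m (\<lambda>_. 1) * nu m h * Zi"
    using Eb_factor[OF m h, of "\<lambda>_. 1"] by simp
  have "Eb (\<lambda>q. \<phi> (count q m)) * Eb h = iota m \<phi> * nu m h * Zi * (iota m (\<lambda>_. 1) * nu m (\<lambda>_. 1) * Zi)"
    unfolding e1 e2 by (simp add: algebra_simps)
  also have "\<dots> = iota m \<phi> * nu m h * Zi" using Zs_factor[OF m] Zs_Zi by simp
  finally show ?thesis using Eb_factor[OF assms] by simp
qed

lemma Eb_one_var:
  assumes m: "m \<noteq> 0"
  shows "Eb (\<lambda>q. \<phi> (count q m)) = iota m \<phi> * Qs m"
proof -
  have "Eb (\<lambda>q. \<phi> (count q m)) = iota m \<phi> * nu m (\<lambda>_. 1) * Zi"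
    using Eb_factor[OF m indep_const, of \<phi> 1] by simp
  also have "\<dots> = iota m \<phi> * Qs m * (iota m (\<lambda>_. 1) * nu m (\<lambda>_. 1) * Zi)"
  proof -
    have "iota m \<phi> * Qs m * (iota m (\<lambda>_. 1) * nu m (\<lambda>_. 1) * Zi) =
        iota m \<phi> * nu m (\<lambda>_. 1) * Zi * (iota m (\<lambda>_. 1) * Qs m)" by (simp only: ac_simps)
    then show ?thesis using iota_one_Qs[of m] by simp
  qed
  also have "\<dots> = iota m \<phi> * Qs m" using Zs_factor[OF m] Zs_Zi by simp
  finally show ?thesis .
qed

lemma iota_add: "iota m a + iota m b = iota m (\<lambda>s. a s + b s)"
  by (rule ser_eqI) (simp add: iota_def)
lemma sc_iota: "sc c * iota m a = iota m (\<lambda>s. c * a s)"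
  by (rule ser_eqI) (simp add: iota_def coef_sc_mult)
lemma iota_sum: "(\<Sum>j\<in>J. iota m (f j)) = iota m (\<lambda>s. \<Sum>j\<in>J. f j s)"
  by (rule ser_eqI) (simp add: iota_def coef_sum)

definition Gm :: "nat \<Rightarrow> nat \<Rightarrow> ser" where
  "Gm m e = iota m (\<lambda>s. of_nat s ^ e)"
definition Um :: "nat \<Rightarrow> nat \<Rightarrow> ser" where
  "Um m j = iota m (\<lambda>i. if i = 0 then 0 else of_nat i ^ (j - 1))"

lemma Um_Suc: "Um m (Suc j) = iota m (\<lambda>i. if i = 0 then 0 else of_nat i ^ j)"
  unfolding Um_def apply (rule arg_cong[where f="iota m"]) apply (rule ext) apply simp done

lemma conv_scale: "conv (\<lambda>s. c * a s) b = (\<lambda>s. c * conv a b s)"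
  by (simp add: fun_eq_iff conv_def sum_distrib_left mult.assoc)

lemma Gm_rec: "Gm m (Suc d) = (\<Sum>j\<le>d. of_nat (d choose j) * Um m (j + 1) * Gm m (d - j))"
proof -
  have "(\<Sum>j\<le>d. of_nat (d choose j) * Um m (j + 1) * Gm m (d - j)) =
      (\<Sum>j\<le>d. iota m (\<lambda>s. of_nat (d choose j) * conv (\<lambda>i. if i = 0 then 0 else of_nat i ^ j) (\<lambda>s. of_nat s ^ (d - j)) s))"
    by (simp add: Um_Suc Gm_def mult.assoc iota_mult sc_of_nat sc_iota conv_scale)
  also have "\<dots> = iota m (\<lambda>s. \<Sum>j\<le>d. of_nat (d choose j) * conv (\<lambda>i. if i = 0 then 0 else of_nat i ^ j) (\<lambda>s. of_nat s ^ (d - j)) s)"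
    by (rule iota_sum)
  also have "(\<lambda>s. \<Sum>j\<le>d. of_nat (d choose j) * conv (\<lambda>i. if i = 0 then 0 else of_nat i ^ j) (\<lambda>s. of_nat s ^ (d - j)) s) =
      (\<lambda>s. of_nat s ^ Suc d :: rat)"
  proof
    fix s
    have "(\<Sum>j\<le>d. of_nat (d choose j) * conv (\<lambda>i. if i = 0 then 0 else of_nat i ^ j) (\<lambda>s. of_nat s ^ (d - j)) s) =
        (\<Sum>j\<le>d. \<Sum>i\<le>s. if i = 0 then 0 else of_nat (d choose j) * of_nat i ^ j * of_nat (s - i) ^ (d - j) :: rat)"
      unfolding conv_def sum_distrib_left by (intro sum.cong) auto
    also have "\<dots> = (\<Sum>i\<le>s. if i = 0 then 0 else \<Sum>j\<le>d. of_nat (d choose j) * of_nat i ^ j * of_nat (s - i) ^ (d - j) :: rat)"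
      by (subst sum.swap) (auto intro!: sum.cong)
    also have "\<dots> = (\<Sum>i\<le>s. if i = 0 then 0 else of_nat s ^ d :: rat)"
    proof (intro sum.cong refl)
      fix i assume "i \<in> {..s}"
      then have "of_nat i + of_nat (s - i) = (of_nat s :: rat)" by (simp flip: of_nat_add)
      then have "(\<Sum>j\<le>d. of_nat (d choose j) * of_nat i ^ j * of_nat (s - i) ^ (d - j) :: rat) = of_nat s ^ d"
        unfolding \<open>of_nat i + of_nat (s - i) = (of_nat s :: rat)\<close>[symmetric] by (subst binomial_ring) (rule refl)
      then show "(if i = 0 then 0 else \<Sum>j\<le>d. of_nat (d choose j) * of_nat i ^ j * of_nat (s - i) ^ (d - j) :: rat) =
          (if i = 0 then 0 else of_nat s ^ d)" by simp
    qed
    also have "\<dots> = of_nat s ^ Suc d"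
    proof -
      have eq: "{..s} \<inter> - {0::nat} = {1..s}" by auto
      show ?thesis by (simp add: sum.If_cases eq)
    qed
    finally show "(\<Sum>j\<le>d. of_nat (d choose j) * conv (\<lambda>i. if i = 0 then 0 else of_nat i ^ j) (\<lambda>s. of_nat s ^ (d - j)) s) =
      (of_nat s ^ Suc d :: rat)" .
  qed
  finally show ?thesis by (simp add: Gm_def)
qed

definition Er :: "nat \<Rightarrow> nat \<Rightarrow> ser" where
  "Er m e = Eb (\<lambda>q. of_nat (count q m) ^ e)"

lemma Er_eq: "m \<noteq> 0 \<Longrightarrow> Er m e = Gm m e * Qs m"
  using Eb_one_var[of m "\<lambda>s. of_nat s ^ e"] by (simp add: Er_def Gm_def)

lemma Er_rec: "m \<noteq> 0 \<Longrightarrow> Er m (Suc d) = (\<Sum>j\<le>d. of_nat (d choose j) * Um m (j + 1) * Er m (d - j))"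
  by (simp add: Er_eq Gm_rec sum_distrib_right mult.assoc)

lemma sum_Pow_card:
  fixes g :: "nat \<Rightarrow> 'a::comm_semiring_1"
  assumes "finite D"
  shows "(\<Sum>B\<in>Pow D. g (card B)) = (\<Sum>j\<le>card D. of_nat (card D choose j) * g j)"
proof -
  have "(\<Sum>B\<in>Pow D. g (card B)) = (\<Sum>j\<in>{..card D}. \<Sum>B\<in>{B \<in> Pow D. card B = j}. g (card B))"
    using assms by (intro sum.group[symmetric]) (auto simp: card_mono)
  also have "\<dots> = (\<Sum>j\<le>card D. of_nat (card D choose j) * g j)"
  proof (rule sum.cong)
    fix j
    have "{B \<in> Pow D. card B = j} = {B. B \<subseteq> D \<and> card B = j}" by auto
    then show "(\<Sum>B\<in>{B \<in> Pow D. card B = j}. g (card B)) = of_nat (card D choose j) * g j"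
      using n_subsets[OF assms, of j] by simp
  qed simp
  finally show ?thesis .
qed

lemma Er_subset_rec:
  assumes "m \<noteq> 0" "finite D"
  shows "Er m (Suc (card D)) = (\<Sum>B\<in>Pow D. Um m (card B + 1) * Er m (card (D - B)))"
proof -
  have "(\<Sum>B\<in>Pow D. Um m (card B + 1) * Er m (card (D - B))) =
      (\<Sum>B\<in>Pow D. Um m (card B + 1) * Er m (card D - card B))"
    using assms(2) by (intro sum.cong) (auto simp: card_Diff_subset finite_subset)
  also have "\<dots> = (\<Sum>j\<le>card D. of_nat (card D choose j) * (Um m (j + 1) * Er m (card D - j)))"
    by (rule sum_Pow_card[OF assms(2)])
  also have "\<dots> = Er m (card D + 1)"
    using Er_rec[OF assms(1), of "card D"] by (simp add: mult.assoc)
  finally show ?thesis by simp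
qed

lemma sum_Pow_Pow_reindex:
  fixes f :: "'e set \<Rightarrow> 'e set \<Rightarrow> 'a::comm_monoid_add"
  assumes "finite SS"
  shows "(\<Sum>D\<in>Pow SS. \<Sum>B\<in>Pow D. f B D) = (\<Sum>B\<in>Pow SS. \<Sum>D'\<in>Pow (SS - B). f B (B \<union> D'))"
proof -
  have fin1: "finite (Pow D)" if "D \<in> Pow SS" for D using that assms by (auto intro: finite_subset)
  have "(\<Sum>D\<in>Pow SS. \<Sum>B\<in>Pow D. f B D) = (\<Sum>(D, B)\<in>(SIGMA D:Pow SS. Pow D). f B D)"
    using assms by (subst sum.Sigma) (auto intro: finite_subset)
  also have "\<dots> = (\<Sum>(B, D')\<in>(SIGMA B:Pow SS. Pow (SS - B)). f B (B \<union> D'))"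
    by (rule sum.reindex_bij_witness[where j="\<lambda>(D, B). (B, D - B)" and i="\<lambda>(B, D'). (B \<union> D', B)"])
       (auto simp: Un_absorb1)
  also have "\<dots> = (\<Sum>B\<in>Pow SS. \<Sum>D'\<in>Pow (SS - B). f B (B \<union> D'))"
    using assms by (subst sum.Sigma) (auto intro: finite_subset)
  finally show ?thesis .
qed

locale cumctx =
  fixes T :: "nat set" and c :: "nat \<Rightarrow> rat" and w :: "nat \<Rightarrow> nat \<Rightarrow> rat"
  assumes finT: "finite T" and T0: "0 \<notin> T"
begin

definition Xf :: "nat \<Rightarrow> nat multiset \<Rightarrow> rat" where
  "Xf i = (\<lambda>q. c i + (\<Sum>m\<in>T. w i m * of_nat (count q m)))"
definition XP :: "nat set \<Rightarrow> nat multiset \<Rightarrow> rat" where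
  "XP C = (\<lambda>q. \<Prod>i\<in>C. Xf i q)"
definition Mo :: "nat set \<Rightarrow> ser" where
  "Mo C = Eb (XP C)"
definition Kf :: "nat set \<Rightarrow> ser" where
  "Kf B = sc (if card B = 1 then (\<Sum>b\<in>B. c b) else 0) + (\<Sum>m\<in>T. sc (\<Prod>b\<in>B. w b m) * Um m (card B))"

definition Af :: "nat \<Rightarrow> nat \<Rightarrow> nat multiset \<Rightarrow> rat" where
  "Af m i = (\<lambda>q. c i + (\<Sum>m'\<in>T - {m}. w i m' * of_nat (count q m')))"
definition AP :: "nat \<Rightarrow> nat set \<Rightarrow> nat multiset \<Rightarrow> rat" where
  "AP m SS = (\<lambda>q. \<Prod>i\<in>SS. Af m i q)"

lemma indep_AP: "indep m (AP m SS)"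
  unfolding indep_def AP_def Af_def by (auto intro!: prod.cong sum.cong)

lemma Xf_split: "m \<in> T \<Longrightarrow> Xf i q = w i m * of_nat (count q m) + Af m i q"
  unfolding Xf_def Af_def using finT by (simp add: sum.remove algebra_simps)

lemma XP_expand:
  assumes m: "m \<in> T" and SS: "finite SS"
  shows "XP SS q = (\<Sum>D\<in>Pow SS. (\<Prod>i\<in>D. w i m) * of_nat (count q m) ^ card D * AP m (SS - D) q)"
proof -
  have "XP SS q = (\<Prod>i\<in>SS. w i m * of_nat (count q m) + Af m i q)"
    unfolding XP_def using Xf_split[OF m] by simp
  also have "\<dots> = (\<Sum>D\<in>Pow SS. (\<Prod>i\<in>D. w i m * of_nat (count q m)) * (\<Prod>i\<in>SS - D. Af m i q))"
    by (rule prod_add[OF SS])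
  also have "\<dots> = (\<Sum>D\<in>Pow SS. (\<Prod>i\<in>D. w i m) * of_nat (count q m) ^ card D * AP m (SS - D) q)"
    by (rule sum.cong) (auto simp: prod.distrib AP_def)
  finally show ?thesis .
qed

lemma Eb_expand:
  assumes m: "m \<in> T" and SS: "finite SS"
  shows "Eb (\<lambda>q. of_nat (count q m) ^ k * XP SS q) =
    (\<Sum>D\<in>Pow SS. sc (\<Prod>i\<in>D. w i m) * (Er m (card D + k) * Eb (AP m (SS - D))))"
proof -
  have m0: "m \<noteq> 0" by (rule ccontr) (use m T0 in simp)
  have "(\<lambda>q. of_nat (count q m) ^ k * XP SS q) =
      (\<lambda>q. \<Sum>D\<in>Pow SS. (\<Prod>i\<in>D. w i m) * ((\<lambda>s. of_nat s ^ (card D + k)) (count q m) * AP m (SS - D) q))"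
    by (auto simp: XP_expand[OF m SS] sum_distrib_left power_add intro!: sum.cong)
  then have "Eb (\<lambda>q. of_nat (count q m) ^ k * XP SS q) =
      (\<Sum>D\<in>Pow SS. sc (\<Prod>i\<in>D. w i m) * Eb (\<lambda>q. (\<lambda>s. of_nat s ^ (card D + k)) (count q m) * AP m (SS - D) q))"
    by (simp add: Eb_sum Eb_scale)
  also have "\<dots> = (\<Sum>D\<in>Pow SS. sc (\<Prod>i\<in>D. w i m) * (Er m (card D + k) * Eb (AP m (SS - D))))"
  proof (intro sum.cong refl)
    fix D assume "D \<in> Pow SS"
    show "sc (\<Prod>i\<in>D. w i m) * Eb (\<lambda>q. (\<lambda>s. of_nat s ^ (card D + k)) (count q m) * AP m (SS - D) q) =
        sc (\<Prod>i\<in>D. w i m) * (Er m (card D + k) * Eb (AP m (SS - D)))"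
      using Eb_indep[OF m0 indep_AP, where \<phi>="\<lambda>s. of_nat s ^ (card D + k)"] by (simp add: Er_def)
  qed
  finally show ?thesis .
qed

lemma stein:
  assumes m: "m \<in> T" and C: "finite C"
  shows "Eb (\<lambda>q. of_nat (count q m) * XP C q) =
    (\<Sum>B\<in>Pow C. sc (\<Prod>b\<in>B. w b m) * Um m (card B + 1) * Mo (C - B))"
proof -
  have m0: "m \<noteq> 0" by (rule ccontr) (use m T0 in simp)
  have fin: "finite D" if "D \<in> Pow C" for D using that C by (auto intro: finite_subset)
  have "Eb (\<lambda>q. of_nat (count q m) * XP C q) = Eb (\<lambda>q. of_nat (count q m) ^ 1 * XP C q)" by simp
  also have "\<dots> = (\<Sum>D\<in>Pow C. sc (\<Prod>i\<in>D. w i m) * (Er m (card D + 1) * Eb (AP m (C - D))))"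
    by (rule Eb_expand[OF m C])
  also have "\<dots> = (\<Sum>D\<in>Pow C. \<Sum>B\<in>Pow D. sc (\<Prod>i\<in>D. w i m) * (Um m (card B + 1) * Er m (card (D - B)) * Eb (AP m (C - D))))"
  proof (intro sum.cong refl)
    fix D assume D: "D \<in> Pow C"
    show "sc (\<Prod>i\<in>D. w i m) * (Er m (card D + 1) * Eb (AP m (C - D))) =
        (\<Sum>B\<in>Pow D. sc (\<Prod>i\<in>D. w i m) * (Um m (card B + 1) * Er m (card (D - B)) * Eb (AP m (C - D))))"
      using Er_subset_rec[OF m0 fin[OF D]] by (simp add: sum_distrib_left sum_distrib_right)
  qed
  also have "\<dots> = (\<Sum>B\<in>Pow C. \<Sum>D'\<in>Pow (C - B). sc (\<Prod>i\<in>B \<union> D'. w i m) * (Um m (card B + 1) * Er m (card ((B \<union> D') - B)) * Eb (AP m (C - (B \<union> D')))))"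
    by (rule sum_Pow_Pow_reindex[OF C])
  also have "\<dots> = (\<Sum>B\<in>Pow C. sc (\<Prod>b\<in>B. w b m) * Um m (card B + 1) *
       (\<Sum>D'\<in>Pow (C - B). sc (\<Prod>i\<in>D'. w i m) * (Er m (card D' + 0) * Eb (AP m ((C - B) - D')))))"
  proof (intro sum.cong refl)
    fix B assume B: "B \<in> Pow C"
    show "(\<Sum>D'\<in>Pow (C - B). sc (\<Prod>i\<in>B \<union> D'. w i m) * (Um m (card B + 1) * Er m (card ((B \<union> D') - B)) * Eb (AP m (C - (B \<union> D'))))) =
      sc (\<Prod>b\<in>B. w b m) * Um m (card B + 1) *
       (\<Sum>D'\<in>Pow (C - B). sc (\<Prod>i\<in>D'. w i m) * (Er m (card D' + 0) * Eb (AP m ((C - B) - D'))))"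
      unfolding sum_distrib_left
    proof (intro sum.cong refl)
      fix D' assume D': "D' \<in> Pow (C - B)"
      have fB: "finite B" "finite D'" using B D' C by (auto intro: finite_subset)
      have dj: "B \<inter> D' = {}" using D' by auto
      have "(\<Prod>i\<in>B \<union> D'. w i m) = (\<Prod>i\<in>B. w i m) * (\<Prod>i\<in>D'. w i m)"
        using fB dj by (rule prod.union_disjoint)
      moreover have "(B \<union> D') - B = D'" using dj by auto
      moreover have "C - (B \<union> D') = (C - B) - D'" by auto
      ultimately show "sc (\<Prod>i\<in>B \<union> D'. w i m) * (Um m (card B + 1) * Er m (card ((B \<union> D') - B)) * Eb (AP m (C - (B \<union> D')))) =
        sc (\<Prod>b\<in>B. w b m) * Um m (card B + 1) * (sc (\<Prod>i\<in>D'. w i m) * (Er m (card D' + 0) * Eb (AP m ((C - B) - D'))))"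
        by (simp add: sc_mult algebra_simps)
    qed
  qed
  also have "\<dots> = (\<Sum>B\<in>Pow C. sc (\<Prod>b\<in>B. w b m) * Um m (card B + 1) * Mo (C - B))"
  proof (intro sum.cong refl)
    fix B assume "B \<in> Pow C"
    have "Mo (C - B) = Eb (\<lambda>q. of_nat (count q m) ^ 0 * XP (C - B) q)" by (simp add: Mo_def)
    also have "\<dots> = (\<Sum>D'\<in>Pow (C - B). sc (\<Prod>i\<in>D'. w i m) * (Er m (card D' + 0) * Eb (AP m ((C - B) - D'))))"
      using C by (intro Eb_expand[OF m]) auto
    finally show "sc (\<Prod>b\<in>B. w b m) * Um m (card B + 1) *
       (\<Sum>D'\<in>Pow (C - B). sc (\<Prod>i\<in>D'. w i m) * (Er m (card D' + 0) * Eb (AP m ((C - B) - D')))) =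
       sc (\<Prod>b\<in>B. w b m) * Um m (card B + 1) * Mo (C - B)" by simp
  qed
  finally show ?thesis .
qed

lemma K_rec:
  assumes C: "finite C" and c0: "c0 \<in> C"
  shows "(\<Sum>B\<in>{B. c0 \<in> B \<and> B \<subseteq> C}. Kf B * Mo (C - B)) = Mo C"
proof -
  define C' where "C' = C - {c0}"
  have C': "finite C'" "c0 \<notin> C'" using C by (auto simp: C'_def)
  have CC: "C = insert c0 C'" using c0 by (auto simp: C'_def)
  have finB: "finite B" if "B \<in> Pow C'" for B using that C' by (auto intro: finite_subset)
  have "XP C = (\<lambda>q. c c0 * XP C' q + (\<Sum>m\<in>T. w c0 m * (of_nat (count q m) * XP C' q)))"
    by (auto simp: XP_def CC C' Xf_def algebra_simps sum_distrib_left sum_distrib_right fun_eq_iff)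
  then have "Mo C = sc (c c0) * Mo C' + (\<Sum>m\<in>T. sc (w c0 m) * Eb (\<lambda>q. of_nat (count q m) * XP C' q))"
    by (simp add: Mo_def Eb_add Eb_scale Eb_sum)
  also have "\<dots> = sc (c c0) * Mo C' +
      (\<Sum>m\<in>T. \<Sum>B\<in>Pow C'. sc (w c0 m) * (sc (\<Prod>b\<in>B. w b m) * Um m (card B + 1) * Mo (C' - B)))"
    by (simp add: stein C' sum_distrib_left)
  also have "\<dots> = (\<Sum>B\<in>Pow C'. Kf (insert c0 B) * Mo (C - insert c0 B))"
  proof -
    have K: "Kf (insert c0 B) = sc (if B = {} then c c0 else 0) +
        (\<Sum>m\<in>T. sc (w c0 m) * sc (\<Prod>b\<in>B. w b m) * Um m (card B + 1))" if "B \<in> Pow C'" for B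
    proof -
      have "c0 \<notin> B" using that C' by auto
      then show ?thesis using finB[OF that] by (auto simp: Kf_def sc_mult card_insert_if)
    qed
    have D: "C - insert c0 B = C' - B" for B by (auto simp: C'_def)
    have "(\<Sum>B\<in>Pow C'. Kf (insert c0 B) * Mo (C - insert c0 B)) =
        (\<Sum>B\<in>Pow C'. sc (if B = {} then c c0 else 0) * Mo (C' - B)) +
        (\<Sum>B\<in>Pow C'. \<Sum>m\<in>T. sc (w c0 m) * (sc (\<Prod>b\<in>B. w b m) * Um m (card B + 1) * Mo (C' - B)))"
      by (simp add: K D sum.distrib distrib_right sum_distrib_right mult.assoc)
    also have "(\<Sum>B\<in>Pow C'. sc (if B = {} then c c0 else 0) * Mo (C' - B)) = sc (c c0) * Mo C'"
    proof -
      have "(\<Sum>B\<in>Pow C'. sc (if B = {} then c c0 else 0) * Mo (C' - B)) =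
          (\<Sum>B\<in>Pow C'. if B = {} then sc (c c0) * Mo (C' - B) else 0)"
        by (intro sum.cong refl) (simp add: sc_zero)
      also have "\<dots> = sc (c c0) * Mo C'" using C' by (subst sum.delta) auto
      finally show ?thesis .
    qed
    also have "(\<Sum>B\<in>Pow C'. \<Sum>m\<in>T. sc (w c0 m) * (sc (\<Prod>b\<in>B. w b m) * Um m (card B + 1) * Mo (C' - B))) =
        (\<Sum>m\<in>T. \<Sum>B\<in>Pow C'. sc (w c0 m) * (sc (\<Prod>b\<in>B. w b m) * Um m (card B + 1) * Mo (C' - B)))"
      by (rule sum.swap)
    finally show ?thesis by simp
  qed
  also have "\<dots> = (\<Sum>B\<in>{B. c0 \<in> B \<and> B \<subseteq> C}. Kf B * Mo (C - B))"
  proof -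
    have "{B. c0 \<in> B \<and> B \<subseteq> C} = insert c0 ` Pow C'"
    proof
      show "{B. c0 \<in> B \<and> B \<subseteq> C} \<subseteq> insert c0 ` Pow C'"
      proof
        fix B assume "B \<in> {B. c0 \<in> B \<and> B \<subseteq> C}"
        then have "B = insert c0 (B - {c0})" "B - {c0} \<in> Pow C'" by (auto simp: C'_def)
        then show "B \<in> insert c0 ` Pow C'" by blast
      qed
    qed (auto simp: CC)
    moreover have "inj_on (insert c0) (Pow C')"
      using C' by (auto simp: inj_on_def)
    ultimately show ?thesis by (simp add: sum.reindex)
  qed
  finally show ?thesis ..
qed

lemma Mo_empty: "Mo {} = 1"
  by (simp add: Mo_def XP_def Eb_const sc_one)

theorem K_eq_cum:
  assumes "finite U" "C \<subseteq> U" "C \<noteq> {}"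
  shows "Kf C = cum Mo C"
proof (rule cum_unique[of U Mo Kf C])
  fix C' c assume "C' \<subseteq> U" "c \<in> C'"
  then show "(\<Sum>B\<in>{B. c \<in> B \<and> B \<subseteq> C'}. Kf B * Mo (C' - B)) = Mo C'"
    by (intro K_rec) (auto intro: finite_subset[OF _ assms(1)])
qed (use assms Mo_empty in auto)

end

definition agree :: "nat multiset \<Rightarrow> ser \<Rightarrow> ser \<Rightarrow> bool" where
  "agree p x y \<longleftrightarrow> (\<forall>N. N \<subseteq># p \<longrightarrow> coef x N = coef y N)"

lemma agree_refl: "agree p x x" by (simp add: agree_def)
lemma agree_sym: "agree p x y \<Longrightarrow> agree p y x" by (simp add: agree_def)
lemma agree_trans: "agree p x y \<Longrightarrow> agree p y z \<Longrightarrow> agree p x z" by (simp add: agree_def)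
lemma agree_add: "agree p x x' \<Longrightarrow> agree p y y' \<Longrightarrow> agree p (x + y) (x' + y')"
  by (simp add: agree_def)
lemma agree_mult: "agree p x x' \<Longrightarrow> agree p y y' \<Longrightarrow> agree p (x * y) (x' * y')"
  unfolding agree_def coef_mult
  by (auto intro!: sum.cong) (meson diff_subset_eq_self subset_mset.order_trans)+
lemma agree_sum: "(\<And>i. i \<in> I \<Longrightarrow> agree p (f i) (g i)) \<Longrightarrow> agree p (sum f I) (sum g I)"
  by (induction I rule: infinite_finite_induct) (auto simp: agree_refl intro: agree_add)
lemma agree_prod: "(\<And>i. i \<in> I \<Longrightarrow> agree p (f i) (g i)) \<Longrightarrow> agree p (prod f I) (prod g I)"
  by (induction I rule: infinite_finite_induct) (auto simp: agree_refl intro: agree_mult)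
lemma agree_gs: "(\<And>q. q \<subseteq># p \<Longrightarrow> f q = g q) \<Longrightarrow> agree p (gs f) (gs g)"
  by (simp add: agree_def coef_gs)
lemma agree_Eb: "(\<And>q. q \<subseteq># p \<Longrightarrow> f q = g q) \<Longrightarrow> agree p (Eb f) (Eb g)"
  by (simp add: Eb_eq agree_mult agree_gs agree_refl)
lemma agree_cum: "(\<And>A. agree p (m1 A) (m2 A)) \<Longrightarrow> agree p (cum m1 C) (cum m2 C)"
  unfolding cum_def by (intro agree_sum agree_mult agree_refl agree_prod) auto
lemma agree_coef_Zs: "agree p x y \<Longrightarrow> coef (x * Zs) p = coef (y * Zs) p"
  using agree_mult[OF _ agree_refl, of p x y Zs] by (simp add: agree_def)

lemma sum_mset_count:
  fixes f :: "'a \<Rightarrow> 'b::comm_semiring_1"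
  assumes "finite U" "set_mset q \<subseteq> U"
  shows "(\<Sum>x\<in>#q. f x) = (\<Sum>m\<in>U. of_nat (count q m) * f m)"
  using assms(2)
proof (induction q)
  case empty
  then show ?case by simp
next
  case (add x q)
  then have "x \<in> U" by simp
  have "of_nat (count (add_mset x q) m) * f m = of_nat (count q m) * f m + (if m = x then f m else 0)" for m
    by (auto simp: algebra_simps)
  then have "(\<Sum>m\<in>U. of_nat (count (add_mset x q) m) * f m) =
      (\<Sum>m\<in>U. of_nat (count q m) * f m) + (\<Sum>m\<in>U. if m = x then f m else 0)"
    by (simp add: sum.distrib)
  also have "(\<Sum>m\<in>U. if m = x then f m else 0) = f x"
    using assms(1) \<open>x \<in> U\<close> by simp
  finally show ?case using add by (simp add: add.commute)
qed

lemma mu_ser: "(mu l :: ser) = sc (mu l)"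
  by (simp only: mu_def sc_mult sc_power sc_uminus sc_one sc_of_nat)

lemma connected_product_eq:
  assumes "is_partition p"
  shows "connected_product n f p = coef (cum (\<lambda>A. Eb (\<lambda>q. \<Prod>a\<in>A. f a q)) {1..n} * Zs) p"
proof -
  have fin: "finite \<alpha>" if "\<alpha> \<in> {P. partition_on {1..n} P}" for \<alpha>
    using that finite_elements[of "{1..n}"] by auto
  have "connected_product n f p = (\<Sum>\<alpha>\<in>{P. partition_on {1..n} P}.
      mu (card \<alpha>) * coef ((\<Prod>A\<in>\<alpha>. Eb (\<lambda>q. \<Prod>a\<in>A. f a q)) * Zs) p)"
    unfolding connected_product_def mu_def
    by (intro sum.cong refl) (simp add: odot_family_eq[OF fin assms])
  also have "\<dots> = coef (cum (\<lambda>A. Eb (\<lambda>q. \<Prod>a\<in>A. f a q)) {1..n} * Zs) p"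
    unfolding cum_def sum_distrib_right coef_sum
    by (intro sum.cong refl) (simp add: mu_ser mult.assoc coef_sc_mult)
  finally show ?thesis .
qed

lemma faulhaber_0: "faulhaber n 0 = 0" by (simp add: faulhaber_def)

lemma iota_faulhaber: "iota m (faulhaber n) * Qs m = Um m (Suc (n - 1)) * (iota m (\<lambda>_. 1) * Qs m)"
proof -
  have "conv (\<lambda>i. if i = 0 then 0 else of_nat i ^ (n - 1)) (\<lambda>_. 1) = faulhaber n"
  proof
    fix s
    have "conv (\<lambda>i. if i = 0 then 0 else of_nat i ^ (n - 1)) (\<lambda>_. 1) s =
        (\<Sum>i\<in>{..s}. if i = 0 then 0 else of_nat i ^ (n - 1))" by (simp add: conv_def)
    also have "\<dots> = (\<Sum>i\<in>{1..s}. of_nat i ^ (n - 1))"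
    proof -
      have eq: "{..s} \<inter> - {0::nat} = {1..s}" by auto
      show ?thesis by (simp add: sum.If_cases eq)
    qed
    finally show "conv (\<lambda>i. if i = 0 then 0 else of_nat i ^ (n - 1)) (\<lambda>_. 1) s = faulhaber n s"
      by (simp add: faulhaber_def)
  qed
  then have "Um m (Suc (n - 1)) * iota m (\<lambda>_. 1) = iota m (faulhaber n)"
    by (simp only: Um_Suc iota_mult)
  then show ?thesis by (metis mult.assoc)
qed

lemma sum_minus_card:
  assumes "\<forall>i\<in>{1..n}. k i > (0::nat)"
  shows "(\<Sum>i=1..n. k i - 1) = (\<Sum>i=1..n. k i) - n"
proof -
  have "(\<Sum>i=1..n. k i - 1 + 1) = (\<Sum>i=1..n. k i - 1) + (\<Sum>i=1..n. 1)" by (rule sum.distrib)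
  then have "(\<Sum>i=1..n. k i - 1) + n = (\<Sum>i=1..n. k i - 1 + 1)" by simp
  also have "\<dots> = (\<Sum>i=1..n. k i)" using assms by (intro sum.cong) auto
  finally show ?thesis by simp
qed

theorem corollary3p5p6:
  fixes n :: nat and k :: "nat \<Rightarrow> nat"
  assumes "n \<ge> 1"
    and "\<forall>i\<in>{1..n}. k i > 0 \<and> even (k i)"
  shows "\<forall>p. is_partition p \<longrightarrow>
    connected_product n (\<lambda>i. S (k i)) p = S_f ((\<Sum>i=1..n. k i) - n) (faulhaber n) p"
proof (intro allI impI)
  fix p assume p: "is_partition p"
  define T where "T = set_mset p"
  define c where "c = (\<lambda>i. - bernoulli (k i) / (2 * of_nat (k i)))"
  define w where "w = (\<lambda>i (m::nat). (of_nat m :: rat) ^ (k i - 1))"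
  define e where "e = (\<Sum>i=1..n. k i) - n"
  define F where "F = faulhaber n"
  interpret cumctx T c w
    by unfold_locales (use p in \<open>auto simp: T_def is_partition_def\<close>)
  have kpos: "\<forall>i\<in>{1..n}. k i > 0" using assms(2) by auto
  have subT: "set_mset q \<subseteq> T" if "q \<subseteq># p" for q
    using that by (auto simp: T_def dest: mset_subset_eqD)
  have "connected_product n (\<lambda>i. S (k i)) p =
      coef (cum (\<lambda>A. Eb (\<lambda>q. \<Prod>a\<in>A. S (k a) q)) {1..n} * Zs) p"
    by (rule connected_product_eq[OF p])
  also have "\<dots> = coef (cum Mo {1..n} * Zs) p"
  proof (rule agree_coef_Zs, rule agree_cum)
    fix A
    show "agree p (Eb (\<lambda>q. \<Prod>a\<in>A. S (k a) q)) (Mo A)"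
      unfolding Mo_def
    proof (rule agree_Eb)
      fix q assume q: "q \<subseteq># p"
      have "S (k a) q = Xf a q" for a
        unfolding S_def Xf_def
        by (simp add: sum_mset_count[OF finT subT[OF q]] mult.commute c_def w_def)
      then show "(\<Prod>a\<in>A. S (k a) q) = XP A q" by (simp add: XP_def)
    qed
  qed
  also have "cum Mo {1..n} = Kf {1..n}"
    using K_eq_cum[of "{1..n}" "{1..n}"] assms(1) by simp
  also have "coef (Kf {1..n} * Zs) p = coef (Eb (S_f e F) * Zs) p"
  proof (rule agree_coef_Zs)
    define \<delta> where "\<delta> = (if (\<forall>N\<ge>1. F N = of_nat N) then - bernoulli (e+1) / (2 * of_nat (e+1)) else 0)"
    have "agree p (Eb (S_f e F)) (Eb (\<lambda>q. \<delta> + (\<Sum>m\<in>T. of_nat m ^ e * F (count q m))))"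
    proof (rule agree_Eb)
      fix q assume q: "q \<subseteq># p"
      have "(\<Sum>m\<in>set_mset q. of_nat m ^ e * F (count q m)) = (\<Sum>m\<in>T. of_nat m ^ e * F (count q m))"
        using subT[OF q] finT by (intro sum.mono_neutral_left) (auto simp: F_def faulhaber_0 not_in_iff)
      then show "S_f e F q = \<delta> + (\<Sum>m\<in>T. of_nat m ^ e * F (count q m))"
        by (simp add: S_f_def \<delta>_def)
    qed
    moreover have "Eb (\<lambda>q. \<delta> + (\<Sum>m\<in>T. of_nat m ^ e * F (count q m))) =
        sc \<delta> + (\<Sum>m\<in>T. sc (of_nat m ^ e) * Um m n)"
    proof -
      have "Eb (\<lambda>q. F (count q m)) = Um m n" if "m \<in> T" for m
      proof -
        have "m \<noteq> 0" by (rule ccontr) (use that T0 in simp)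
        then have "Eb (\<lambda>q. F (count q m)) = iota m F * Qs m" by (rule Eb_one_var)
        also have "\<dots> = Um m n" using iota_faulhaber[of m n] assms(1) iota_one_Qs[of m]
          by (simp add: F_def)
        finally show ?thesis .
      qed
      then show ?thesis by (simp add: Eb_add Eb_const Eb_sum Eb_scale)
    qed
    moreover have "sc \<delta> + (\<Sum>m\<in>T. sc (of_nat m ^ e) * Um m n) = Kf {1..n}"
    proof -
      have w: "(\<Prod>b\<in>{1..n}. w b m) = of_nat m ^ e" for m
      proof -
        have "(\<Prod>b\<in>{1..n}. w b m) = of_nat m ^ (\<Sum>b\<in>{1..n}. k b - 1)"
          unfolding w_def by (rule power_sum[symmetric])
        then show ?thesis unfolding e_def sum_minus_card[OF kpos] .
      qed
      have d: "\<delta> = (if card {1..n} = 1 then (\<Sum>b\<in>{1..n}. c b) else 0)"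
      proof (cases "n = 1")
        case True
        have "F N = of_nat N" for N by (simp add: F_def True faulhaber_def)
        moreover have "Suc e = k 1" using True kpos by (simp add: e_def)
        ultimately show ?thesis using True by (simp add: \<delta>_def c_def)
      next
        case False
        then have n2: "n \<ge> 2" using assms(1) by simp
        have "F 2 = 1 + 2 ^ (n - 1)" by (simp add: F_def faulhaber_def numeral_2_eq_2)
        moreover have "(2::rat) ^ (n - 1) \<ge> 2 ^ 1" using n2 by (intro power_increasing) auto
        ultimately have "F 2 \<noteq> of_nat 2" by auto
        then have "\<delta> = 0" unfolding \<delta>_def by (metis one_le_numeral)
        then show ?thesis using False by simp
      qed
      show ?thesis unfolding Kf_def w d by simp
    qed
    ultimately show "agree p (Kf {1..n}) (Eb (S_f e F))"
      by (metis agree_sym)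
  qed
  also have "coef (Eb (S_f e F) * Zs) p = S_f e F p"
    using p by (simp add: Eb_times_Zs gs_def gen_def)
  finally show "connected_product n (\<lambda>i. S (k i)) p = S_f ((\<Sum>i=1..n. k i) - n) (faulhaber n) p"
    by (simp add: e_def F_def)
qed

end
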